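(* Let $0\le p\le q$ be integers and $\ell\ge0$ an integer. Then $$\nu(\ell,[p]\times[q])=\begin{cases}0,&\ell\le p,\\ \ell-p,&p<\ell\le q,\\ 2\ell-p-q,& q<\ell\le p+q,\\ \ell,&\ell>p+q.\end{cases}$$
   Context: Let $c_1,c_2,\dots$ and $s_1,s_2,\dots$ be distinct vertices. $[i]\times[j]$ denotes the set of pairs $\{c_as_b:1\le a\le i,1\le b\le j\}$. For a set $Q$ of pairs $c_as_b$, $\nu(\ell,Q)$ is the matching number of the bipartite graph with sides $\{c_1,\dots,c_\ell\}$, $\{s_1,\dots,s_\ell\}$ and edge set $([\ell]\times[\ell])\setminus Q$. *)

theory Defs
  imports Main
begin

text \<open>Vertices c_a and s_b are encoded by their indices; an edge c_a s_b of the
bipartite graph is encoded as the pair (a, b). Since the two sides are disjoint,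
this encoding is faithful.\<close>

definition rect :: "nat \<Rightarrow> nat \<Rightarrow> (nat \<times> nat) set" where
  "rect i j = {1..i} \<times> {1..j}"

definition is_matching :: "(nat \<times> nat) set \<Rightarrow> bool" where
  "is_matching M \<longleftrightarrow>
     (\<forall>e\<in>M. \<forall>e'\<in>M. (fst e = fst e' \<or> snd e = snd e') \<longrightarrow> e = e')"

definition nu :: "nat \<Rightarrow> (nat \<times> nat) set \<Rightarrow> nat" where
  "nu l Q = Max {card M | M. M \<subseteq> rect l l - Q \<and> is_matching M}"

end

theory Submission
  imports Defs
begin

lemma upper:
  fixes p q l :: nat
  assumes M: "M \<subseteq> rect l l - rect p q" "is_matching M"
  shows "card M \<le> (l - p) + min p (l - q)"
proof -
  have fin: "finite M" using M(1) unfolding rect_def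
    by (meson finite_Diff finite_SigmaI finite_atLeastAtMost finite_subset)
  define A where "A = M \<inter> {e. fst e \<le> p}"
  define B where "B = M - A"
  have cM: "card M = card A + card B"
  proof -
    have "M = A \<union> B" "A \<inter> B = {}" unfolding A_def B_def by auto
    moreover have "finite A" "finite B" using fin unfolding A_def B_def by auto
    ultimately show ?thesis using card_Un_disjoint by metis
  qed
  have injf: "inj_on fst M" using M(2) unfolding is_matching_def inj_on_def by blast
  have injs: "inj_on snd M" using M(2) unfolding is_matching_def inj_on_def by blast
  have "card B = card (fst ` B)"
    using injf B_def by (metis Diff_subset card_image inj_on_subset)
  also have "\<dots> \<le> card {p<..l}"
    apply (rule card_mono, simp)
    using M(1) unfolding B_def A_def rect_def by auto
  finally have cB: "card B \<le> l - p" by simp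
  have "card A = card (fst ` A)"
    using injf A_def by (metis Int_lower1 card_image inj_on_subset)
  also have "\<dots> \<le> card {1..p}"
    apply (rule card_mono, simp)
    using M(1) unfolding A_def rect_def by auto
  finally have cA1: "card A \<le> p" by simp
  have "card A = card (snd ` A)"
    using injs A_def by (metis Int_lower1 card_image inj_on_subset)
  also have "\<dots> \<le> card {q<..l}"
    apply (rule card_mono, simp)
    using M(1) unfolding A_def rect_def by auto
  finally have cA2: "card A \<le> l - q" by simp
  show ?thesis using cM cA1 cA2 cB by simp
qed

lemma lower:
  fixes p q l :: nat
  shows "\<exists>M. M \<subseteq> rect l l - rect p q \<and> is_matching M \<and>
     card M = (min p (l - q)) + (min l (p+q) - p) + (l - (p+q))"
proof -
  define S where "S = {1..min p (l-q)} \<union> {p<..min l (p+q)} \<union> {p+q<..l}"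
  define f where "f i = (if i \<le> p then q+i else if i \<le> p+q then i-p else i)" for i
  define M where "M = (\<lambda>i. (i, f i)) ` S"
  have injS: "inj_on f S"
  proof (rule inj_on_subset)
    show "inj_on f {1..}" unfolding inj_on_def f_def by (auto split: if_splits)
    show "S \<subseteq> {1..}" unfolding S_def by auto
  qed
  have cM: "card M = card S" unfolding M_def
    by (rule card_image) (auto simp: inj_on_def)
  have "card S = card ({1..min p (l-q)} \<union> {p<..min l (p+q)}) + card {p+q<..l}"
    unfolding S_def by (rule card_Un_disjoint) auto
  also have "card ({1..min p (l-q)} \<union> {p<..min l (p+q)}) = card {1..min p (l-q)} + card {p<..min l (p+q)}"
    by (rule card_Un_disjoint) auto
  finally have cS: "card S = (min p (l - q)) + (min l (p+q) - p) + (l - (p+q))" by simp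
  have pt: "1 \<le> i \<and> i \<le> l \<and> 1 \<le> f i \<and> f i \<le> l \<and> \<not> (i \<le> p \<and> f i \<le> q)" if "i \<in> S" for i
    using that unfolding S_def f_def by auto
  have sub: "M \<subseteq> rect l l - rect p q"
    unfolding M_def rect_def using pt by auto
  have mat: "is_matching M"
    unfolding is_matching_def M_def using injS by (auto simp: inj_on_def)
  show ?thesis
    by (rule exI[of _ M]) (simp only: sub mat cM cS simp_thms)
qed

theorem lemma2:
  fixes p q l :: nat
  assumes "p \<le> q"
  shows "nu l (rect p q) =
    (if l \<le> p then 0
     else if l \<le> q then l - p
     else if l \<le> p + q then 2 * l - p - q
     else l)"
proof -
  define v where "v = (if l \<le> p then 0
     else if l \<le> q then l - p
     else if l \<le> p + q then 2 * l - p - q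
     else l)"
  define S where "S = {card M | M. M \<subseteq> rect l l - rect p q \<and> is_matching M}"
  have fin: "finite S"
  proof -
    have e: "S = card ` {M. M \<subseteq> rect l l - rect p q \<and> is_matching M}"
      unfolding S_def by blast
    have fr: "finite (rect l l)" unfolding rect_def by simp
    have "{M. M \<subseteq> rect l l - rect p q \<and> is_matching M} \<subseteq> Pow (rect l l)" by blast
    then have "finite {M. M \<subseteq> rect l l - rect p q \<and> is_matching M}"
      using fr by (meson finite_Pow_iff finite_subset)
    then show ?thesis using e by simp
  qed
  obtain M0 where M0: "M0 \<subseteq> rect l l - rect p q" "is_matching M0"
     "card M0 = (min p (l - q)) + (min l (p+q) - p) + (l - (p+q))"
    using lower[of l p q] by blast
  have eq: "(min p (l - q)) + (min l (p+q) - p) + (l - (p+q)) = v"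
    using assms unfolding min_def v_def by (simp split: if_splits; linarith)
  have eq2: "(l - p) + min p (l - q) = v"
    using assms unfolding min_def v_def by (simp split: if_splits; linarith)
  have "Max S = v"
  proof (rule Max_eqI[OF fin])
    fix y assume "y \<in> S"
    then obtain M where "M \<subseteq> rect l l - rect p q" "is_matching M" "y = card M"
      unfolding S_def by blast
    then have "y \<le> (l - p) + min p (l - q)" using upper[of M l p q] by simp
    then show "y \<le> v" using eq2 by simp
  next
    have "card M0 \<in> S" unfolding S_def using M0(1,2) by blast
    then show "v \<in> S" using M0(3) eq by simp
  qed
  then show ?thesis unfolding nu_def S_def v_def .
qed

end
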